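(* Let $(s_0,s_1,\dots)$ be a Markov chain on $\mathcal S$ with transition kernel $p(s'\mid s)$ and initial distribution $\xi_0$. Let $\psi:\mathcal S\to\mathbb R^d$ and suppose there exists $M\in\mathbb R^{d\times d}$ such that $\int_{\mathcal S}\psi(s')^\top p(s'\mid s)\,ds'=\psi(s)^\top M$ for all $s\in\mathcal S$. Let $\Sigma_t:=\mathbb E[\psi(s_t)\psi(s_t)^\top\mid s_0\sim\xi_0]$ and assume $\Sigma_{t+1}$ is positive definite. Then $\|\Sigma_t^{1/2}M\Sigma_{t+1}^{-1/2}\|_2\le1$ for $t=0,1,\dots$.
   Context: $\|\cdot\|_2$ is the spectral norm; $A^{1/2}$ is the positive semidefinite square root of a positive semidefinite matrix $A$. *)

theory Defs
  imports "HOL-Analysis.Analysis" "HOL-Probability.Probability"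
begin

definition spectral_norm :: "real^'n^'m \<Rightarrow> real" where
  "spectral_norm A = onorm (\<lambda>x. A *v x)"

definition psd_matrix :: "real^'n^'n \<Rightarrow> bool" where
  "psd_matrix A \<longleftrightarrow> transpose A = A \<and> (\<forall>x. 0 \<le> x \<bullet> (A *v x))"

definition pd_matrix :: "real^'n^'n \<Rightarrow> bool" where
  "pd_matrix A \<longleftrightarrow> transpose A = A \<and> (\<forall>x. x \<noteq> 0 \<longrightarrow> 0 < x \<bullet> (A *v x))"

definition psd_sqrt :: "real^'n^'n \<Rightarrow> real^'n^'n" where
  "psd_sqrt A = (THE B. psd_matrix B \<and> B ** B = A)"

definition outer :: "real^'n \<Rightarrow> real^'n^'n" where
  "outer x = (\<chi> i j. x $ i * x $ j)"

primrec chain_dist :: "'s measure \<Rightarrow> ('s \<Rightarrow> 's measure) \<Rightarrow> nat \<Rightarrow> 's measure" where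
  "chain_dist xi0 K 0 = xi0"
| "chain_dist xi0 K (Suc t) = chain_dist xi0 K t \<bind> K"

end

theory Submission
  imports Defs
begin


definition symm :: "real^'n^'n \<Rightarrow> bool" where
  "symm A \<longleftrightarrow> (\<forall>x y. (A *v x) \<bullet> y = x \<bullet> (A *v y))"

lemma symm_transpose: "symm A \<longleftrightarrow> transpose A = A"
proof
  assume "transpose A = A"
  then show "symm A" unfolding symm_def
    by (metis dot_lmul_matrix vector_transpose_matrix)
next
  assume s: "symm A"
  have "transpose A *v x = A *v x" for x
  proof -
    have "\<forall>y. (transpose A *v x - A *v x) \<bullet> y = 0"
      using s unfolding symm_def
      by (simp add: inner_diff_left transpose_matrix_vector dot_lmul_matrix)
    then show ?thesis by (metis inner_eq_zero_iff eq_iff_diff_eq_0)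
  qed
  then show "transpose A = A" by (simp add: matrix_eq)
qed

lemma eig_exists:
  fixes A :: "real^'n^'n"
  assumes sym: "symm A" and S: "subspace S" and inv: "\<And>x. x \<in> S \<Longrightarrow> A *v x \<in> S"
    and ne: "S \<noteq> {0}"
  shows "\<exists>v\<in>S. norm v = 1 \<and> A *v v = (v \<bullet> (A *v v)) *\<^sub>R v"
proof -
  define K where "K = S \<inter> sphere 0 1"
  have "compact K" unfolding K_def
    using compact_Int_closed[OF compact_sphere closed_subspace[OF S]] by (simp add: Int_commute)
  obtain x0 where x0: "x0 \<in> S" "x0 \<noteq> 0" using ne S subspace_0 by blast
  have "x0 /\<^sub>R norm x0 \<in> K" unfolding K_def using x0 S
    by (simp add: subspace_scale)
  then have "K \<noteq> {}" by blast
  have "continuous_on K (\<lambda>x. x \<bullet> (A *v x))"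
    by (intro continuous_intros matrix_vector_mult_linear_continuous_on)
  from continuous_attains_sup[OF \<open>compact K\<close> \<open>K \<noteq> {}\<close> this]
  obtain v where v: "v \<in> K" and vmax: "\<And>y. y \<in> K \<Longrightarrow> y \<bullet> (A *v y) \<le> v \<bullet> (A *v v)"
    by blast
  define l where "l = v \<bullet> (A *v v)"
  have vS: "v \<in> S" and nv: "norm v = 1" using v unfolding K_def by auto
  have vv: "v \<bullet> v = 1" using nv by (simp add: norm_eq_1)
  have Q: "x \<bullet> (A *v x) \<le> l * (x \<bullet> x)" if "x \<in> S" for x
  proof (cases "x = 0")
    case True then show ?thesis by simp
  next
    case False
    have "x /\<^sub>R norm x \<in> K" unfolding K_def using that False S
      by (simp add: subspace_scale)
    from vmax[OF this] have "(x \<bullet> (A *v x)) / (norm x)^2 \<le> l"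
      unfolding l_def by (simp add: matrix_vector_mult_scaleR power2_eq_square divide_simps)
    then show ?thesis using False
      by (simp add: divide_simps power2_norm_eq_inner mult.commute)
  qed
  define w where "w = A *v v - l *\<^sub>R v"
  have wS: "w \<in> S" unfolding w_def using inv vS S by (simp add: subspace_diff subspace_scale)
  have wv: "w \<bullet> v = 0" unfolding w_def l_def using vv
    by (simp add: inner_diff_left inner_commute[of "A *v v" v])
  have wAv: "w \<bullet> (A *v v) = w \<bullet> w"
    unfolding w_def[symmetric] using wv
    by (simp add: w_def inner_diff_left inner_diff_right)
  define a where "a = w \<bullet> w"
  define d where "d = w \<bullet> (A *v w) - l * a"
  have key: "2 * e * a + e^2 * d \<le> 0" for e :: real
  proof -
    have "v + e *\<^sub>R w \<in> S" using vS wS S by (simp add: subspace_add subspace_scale)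
    from Q[OF this]
    have "(v + e *\<^sub>R w) \<bullet> (A *v (v + e *\<^sub>R w)) \<le> l * ((v + e *\<^sub>R w) \<bullet> (v + e *\<^sub>R w))" .
    moreover have "(v + e *\<^sub>R w) \<bullet> (A *v (v + e *\<^sub>R w)) = l + 2 * e * a + e^2 * (w \<bullet> (A *v w))"
    proof -
      have "(A *v w) \<bullet> v = w \<bullet> (A *v v)" using sym unfolding symm_def by simp
      then show ?thesis using wAv
        by (simp add: matrix_vector_right_distrib matrix_vector_mult_scaleR inner_add_left
            inner_add_right l_def a_def power2_eq_square algebra_simps inner_commute)
    qed
    moreover have "(v + e *\<^sub>R w) \<bullet> (v + e *\<^sub>R w) = 1 + e^2 * a"
      using vv wv by (simp add: inner_add_left inner_add_right a_def power2_eq_square inner_commute)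
    ultimately have "l + 2 * e * a + e^2 * (w \<bullet> (A *v w)) \<le> l * (1 + e^2 * a)" by metis
    then show ?thesis unfolding d_def by (simp add: algebra_simps)
  qed
  have a0: "a = 0"
  proof (rule ccontr)
    assume "a \<noteq> 0"
    then have apos: "a > 0" unfolding a_def by simp
    define e where "e = a / (\<bar>d\<bar> + 1)"
    have epos: "e > 0" using apos by (simp add: e_def)
    have "- (e^2 * d) \<le> e^2 * \<bar>d\<bar>"
      using mult_left_mono[of "-d" "\<bar>d\<bar>" "e^2"] by simp
    then have "2 * e * a \<le> e^2 * \<bar>d\<bar>" using key[of e] by linarith
    then have "e * (2 * a) \<le> e * (e * \<bar>d\<bar>)" by (simp add: power2_eq_square algebra_simps)
    then have "2 * a \<le> e * \<bar>d\<bar>" using epos by simp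
    also have "e * \<bar>d\<bar> < a"
    proof -
      have "a * \<bar>d\<bar> < a * (\<bar>d\<bar> + 1)" using apos by simp
      then show ?thesis unfolding e_def by (simp add: pos_divide_less_eq)
    qed
    finally show False using apos by simp
  qed
  then have "w = 0" unfolding a_def by simp
  then show ?thesis using vS nv unfolding w_def l_def by auto
qed

lemma spectral_sub:
  fixes A :: "real^'n^'n"
  assumes sym: "symm A"
  shows "subspace S \<Longrightarrow> (\<And>x. x \<in> S \<Longrightarrow> A *v x \<in> S) \<Longrightarrow>
    \<exists>U. U \<subseteq> S \<and> finite U \<and> pairwise orthogonal U \<and>
        (\<forall>u\<in>U. norm u = 1 \<and> A *v u = (u \<bullet> (A *v u)) *\<^sub>R u) \<and> span U = S"
proof (induction "dim S" arbitrary: S rule: less_induct)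
  case less
  show ?case
  proof (cases "S = {0}")
    case True
    then show ?thesis by (intro exI[of _ "{}"]) auto
  next
    case False
    obtain v where vS: "v \<in> S" and nv: "norm v = 1" and ev: "A *v v = (v \<bullet> (A *v v)) *\<^sub>R v"
      using eig_exists[OF sym less.prems(1) less.prems(2) False] by blast
    define l where "l = v \<bullet> (A *v v)"
    have vv: "v \<bullet> v = 1" using nv by (simp add: norm_eq_1)
    define S' where "S' = S \<inter> {x. v \<bullet> x = 0}"
    have sub': "subspace S'" unfolding S'_def
      by (intro subspace_inter less.prems(1) subspace_hyperplane)
    have inv': "A *v x \<in> S'" if "x \<in> S'" for x
    proof -
      have "v \<bullet> (A *v x) = (A *v v) \<bullet> x" using sym unfolding symm_def by simp
      also have "\<dots> = l * (v \<bullet> x)" using ev unfolding l_def by (metis inner_scaleR_left)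
      finally show ?thesis using that less.prems(2) unfolding S'_def by auto
    qed
    have "S' \<subset> S" unfolding S'_def using vS vv by (metis (mono_tags) Int_iff mem_Collect_eq psubsetI inf_le1 zero_neq_one)
    then have "span S' \<subset> span S" using sub' less.prems(1) by (metis span_eq_iff)
    then have "dim S' < dim S" by (rule dim_psubset)
    from less.hyps[OF this sub' inv'] obtain U where
      U: "U \<subseteq> S'" "finite U" "pairwise orthogonal U"
         "\<forall>u\<in>U. norm u = 1 \<and> A *v u = (u \<bullet> (A *v u)) *\<^sub>R u" "span U = S'" by blast
    have vU: "v \<notin> U" using U(1) vv unfolding S'_def by auto
    have orth: "orthogonal v u" "orthogonal u v" if "u \<in> U" for u
      using U(1) that unfolding S'_def orthogonal_def by (auto simp: inner_commute)
    show ?thesis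
    proof (intro exI[of _ "insert v U"] conjI)
      show "insert v U \<subseteq> S" using U(1) vS unfolding S'_def by auto
      show "finite (insert v U)" using U(2) by simp
      show "pairwise orthogonal (insert v U)" using U(3) orth
        by (auto simp: pairwise_insert)
      show "\<forall>u\<in>insert v U. norm u = 1 \<and> A *v u = (u \<bullet> (A *v u)) *\<^sub>R u"
        using U(4) nv ev by auto
      show "span (insert v U) = S"
      proof
        show "span (insert v U) \<subseteq> S"
          using \<open>insert v U \<subseteq> S\<close> less.prems(1) by (simp add: span_minimal)
        show "S \<subseteq> span (insert v U)"
        proof
          fix x assume xS: "x \<in> S"
          have "x - (v \<bullet> x) *\<^sub>R v \<in> S'" unfolding S'_def using xS vS vv less.prems(1)
            by (simp add: subspace_diff subspace_scale inner_diff_right)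
          then have "x - (v \<bullet> x) *\<^sub>R v \<in> span (insert v U)"
            using U(5) span_mono[of U "insert v U"] by auto
          moreover have "(v \<bullet> x) *\<^sub>R v \<in> span (insert v U)"
            by (simp add: span_base span_scale)
          ultimately have "(x - (v \<bullet> x) *\<^sub>R v) + (v \<bullet> x) *\<^sub>R v \<in> span (insert v U)"
            by (rule span_add)
          then show "x \<in> span (insert v U)" by simp
        qed
      qed
    qed
  qed
qed

lemma psd_symm: "psd_matrix B \<Longrightarrow> symm B"
  by (simp add: psd_matrix_def symm_transpose)

lemma eig_sqrt:
  fixes B :: "real^'n^'n"
  assumes psd: "psd_matrix B" and sq: "B ** B = A" and ev: "A *v x = lam *\<^sub>R x"
  shows "B *v x = sqrt lam *\<^sub>R x"
proof (cases "x = 0")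
  case True then show ?thesis by simp
next
  case False
  have sB: "symm B" using psd by (rule psd_symm)
  have BB: "B *v (B *v x) = A *v x" for x using sq by (metis matrix_vector_mul_assoc)
  have "(B *v x) \<bullet> (B *v x) = x \<bullet> (A *v x)" using sB BB unfolding symm_def by metis
  also have "\<dots> = lam * (x \<bullet> x)" using ev by simp
  finally have eq: "(B *v x) \<bullet> (B *v x) = lam * (x \<bullet> x)" .
  have "x \<bullet> x > 0" using False by simp
  then have lam0: "lam \<ge> 0" using eq
    by (metis inner_ge_zero zero_le_mult_iff linorder_not_le)
  define s where "s = sqrt lam"
  have s0: "s \<ge> 0" and ss: "s * s = lam" using lam0 by (auto simp: s_def)
  define z where "z = B *v x - s *\<^sub>R x"
  have Bz: "B *v z = (- s) *\<^sub>R z"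
    unfolding z_def using BB[of x] ev ss
    by (simp add: matrix_vector_mult_diff_distrib matrix_vector_mult_scaleR algebra_simps scaleR_diff_right)
  have "0 \<le> z \<bullet> (B *v z)" using psd unfolding psd_matrix_def by blast
  then have "0 \<le> - s * (z \<bullet> z)" using Bz by simp
  show ?thesis
  proof (cases "s = 0")
    case True
    then have "lam = 0" using ss by simp
    then have "B *v x = 0" using eq by simp
    then show ?thesis using True s_def by simp
  next
    case False
    then have "z \<bullet> z \<le> 0" using \<open>0 \<le> - s * (z \<bullet> z)\<close> s0
    proof -
      have "s > 0" using False s0 by simp
      moreover have "0 \<le> s * (- (z \<bullet> z))" using \<open>0 \<le> - s * (z \<bullet> z)\<close> by simp
      ultimately have "0 \<le> - (z \<bullet> z)" using zero_le_mult_iff[of s "- (z \<bullet> z)"] by linarith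
      then show ?thesis by simp
    qed
    then have "z = 0" by (metis inner_eq_zero_iff inner_ge_zero order_antisym)
    then show ?thesis unfolding z_def s_def by simp
  qed
qed

lemma inner_orthonormal_sum:
  fixes U :: "(real^'n) set"
  assumes "finite U" "pairwise orthogonal U" "\<forall>u\<in>U. norm u = 1" "u \<in> U"
  shows "u \<bullet> (\<Sum>w\<in>U. c w *\<^sub>R w) = c u"
proof -
  have "u \<bullet> (\<Sum>w\<in>U. c w *\<^sub>R w) = (\<Sum>w\<in>U. c w * (u \<bullet> w))"
    by (simp add: inner_sum_right)
  also have "\<dots> = (\<Sum>w\<in>U. if w = u then c w else 0)"
  proof (rule sum.cong)
    fix w assume "w \<in> U"
    then show "c w * (u \<bullet> w) = (if w = u then c w else 0)"
      using assms unfolding pairwise_def orthogonal_def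
      by (auto simp: norm_eq_1)
  qed simp
  also have "\<dots> = c u" using assms by simp
  finally show ?thesis .
qed

lemma orthonormal_expand:
  fixes U :: "(real^'n) set"
  assumes "finite U" "pairwise orthogonal U" "\<forall>u\<in>U. norm u = 1" "span U = UNIV"
  shows "x = (\<Sum>u\<in>U. (u \<bullet> x) *\<^sub>R u)"
proof -
  define y where "y = x - (\<Sum>u\<in>U. (u \<bullet> x) *\<^sub>R u)"
  have "orthogonal y w" if "w \<in> U" for w
    using inner_orthonormal_sum[OF assms(1-3) that, of "\<lambda>u. u \<bullet> x"]
    unfolding y_def orthogonal_def by (simp add: inner_diff_left inner_diff_right inner_commute[of _ w])
  then have "orthogonal y y" using orthogonal_to_span[of y U y] assms(4) by auto
  then have "y = 0" by (simp add: orthogonal_def)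
  then show ?thesis unfolding y_def by simp
qed

lemma psd_sqrt_ok:
  fixes A :: "real^'n^'n"
  assumes psdA: "psd_matrix A"
  shows "psd_matrix (psd_sqrt A) \<and> psd_sqrt A ** psd_sqrt A = A"
proof -
  have sA: "symm A" using psdA by (rule psd_symm)
  obtain U where U: "finite U" "pairwise orthogonal U"
      "\<forall>u\<in>U. norm u = 1 \<and> A *v u = (u \<bullet> (A *v u)) *\<^sub>R u" "span U = UNIV"
    using spectral_sub[OF sA subspace_UNIV] by auto
  have U3: "\<forall>u\<in>U. norm u = 1" using U(3) by auto
  define l where "l u = u \<bullet> (A *v u)" for u
  have l0: "l u \<ge> 0" for u using psdA unfolding psd_matrix_def l_def by blast
  have evU: "A *v u = l u *\<^sub>R u" if "u \<in> U" for u using U(3) that unfolding l_def by auto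
  define f where "f x = (\<Sum>u\<in>U. (sqrt (l u) * (u \<bullet> x)) *\<^sub>R u)" for x
  have lin: "linear f"
  proof (rule linearI)
    fix x y show "f (x + y) = f x + f y" unfolding f_def
      by (simp add: inner_add_right distrib_left scaleR_add_left sum.distrib)
  next
    fix c :: real and x show "f (c *\<^sub>R x) = c *\<^sub>R f x" unfolding f_def
      by (simp add: scaleR_sum_right mult.left_commute)
  qed
  define B where "B = matrix f"
  have Bf: "B *v x = f x" for x
    unfolding B_def using lin by (simp add: matrix_works linear_matrix_vector_mul_eq)
  have uf: "u \<bullet> f x = sqrt (l u) * (u \<bullet> x)" if "u \<in> U" for u x
    unfolding f_def using inner_orthonormal_sum[OF U(1) U(2) U3 that] by simp
  have symB: "symm B" unfolding symm_def Bf
  proof (intro allI)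
    fix x y
    have "f x \<bullet> y = (\<Sum>u\<in>U. sqrt (l u) * (u \<bullet> x) * (u \<bullet> y))"
      unfolding f_def by (simp add: inner_sum_left)
    also have "\<dots> = x \<bullet> f y"
      unfolding f_def by (simp add: inner_sum_right, intro sum.cong refl, simp add: inner_commute[of x])
    finally show "f x \<bullet> y = x \<bullet> f y" .
  qed
  have psdB: "psd_matrix B" unfolding psd_matrix_def
  proof
    show "transpose B = B" using symB by (simp add: symm_transpose)
    show "\<forall>x. 0 \<le> x \<bullet> (B *v x)"
    proof
      fix x
      have "x \<bullet> (B *v x) = (\<Sum>u\<in>U. sqrt (l u) * ((u \<bullet> x) * (u \<bullet> x)))"
        unfolding Bf f_def by (simp add: inner_sum_right, intro sum.cong refl, simp add: inner_commute[of x])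
      also have "\<dots> \<ge> 0" by (rule sum_nonneg, rule mult_nonneg_nonneg) (auto simp: l0)
      finally show "0 \<le> x \<bullet> (B *v x)" .
    qed
  qed
  have sqB: "B ** B = A"
  proof (subst matrix_eq, intro allI)
    fix x
    have "(B ** B) *v x = f (f x)" by (simp add: Bf flip: matrix_vector_mul_assoc)
    also have "\<dots> = (\<Sum>u\<in>U. (sqrt (l u) * (sqrt (l u) * (u \<bullet> x))) *\<^sub>R u)"
      unfolding f_def[of "f x"] by (intro sum.cong refl) (simp add: uf)
    also have "\<dots> = (\<Sum>u\<in>U. (u \<bullet> x) *\<^sub>R (A *v u))"
      by (intro sum.cong refl) (simp add: evU l0 mult.assoc[symmetric])
    also have "\<dots> = A *v (\<Sum>u\<in>U. (u \<bullet> x) *\<^sub>R u)"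
      by (simp add: vec.sum matrix_vector_mult_scaleR)
    also have "\<dots> = A *v x" using orthonormal_expand[OF U(1) U(2) U3 U(4), of x] by simp
    finally show "(B ** B) *v x = A *v x" .
  qed
  have uniq: "C = B" if "psd_matrix C \<and> C ** C = A" for C
  proof (subst matrix_eq, intro allI)
    fix x
    have "C *v u = B *v u" if "u \<in> U" for u
    proof -
      have "C *v u = sqrt (l u) *\<^sub>R u"
        using eig_sqrt[of C A u "l u"] evU[OF that] \<open>psd_matrix C \<and> C ** C = A\<close> by blast
      moreover have "B *v u = sqrt (l u) *\<^sub>R u"
        using eig_sqrt[OF psdB sqB evU[OF that]] .
      ultimately show ?thesis by simp
    qed
    then show "C *v x = B *v x"
      using real_vector.linear_eq_on_span[OF matrix_vector_mul_linear matrix_vector_mul_linear, of U C B x]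
        U(4) by auto
  qed
  have "psd_sqrt A = B" unfolding psd_sqrt_def
  proof (rule the_equality)
    show "psd_matrix B \<and> B ** B = A" using psdB sqB by blast
  next
    fix C assume "psd_matrix C \<and> C ** C = A"
    then show "C = B" by (rule uniq)
  qed
  then show ?thesis using psdB sqB by simp
qed




lemma bl_quad: "bounded_linear (\<lambda>A::real^'n^'m. (A *v x) \<bullet> y)"
proof -
  have eq: "(\<lambda>A::real^'n^'m. (A *v x) \<bullet> y) = (\<lambda>A. \<Sum>i\<in>UNIV. \<Sum>j\<in>UNIV. A $ i $ j * (x $ j * y $ i))"
    by (auto simp: inner_vec_def matrix_vector_mult_def sum_distrib_right sum_distrib_left mult_ac)
  have "bounded_linear (\<lambda>A::real^'n^'m. A $ i $ j * c)" for i j c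
    by (rule bounded_linear_compose[OF bounded_linear_mult_left
          bounded_linear_compose[OF bounded_linear_vec_nth bounded_linear_vec_nth]])
  then show ?thesis unfolding eq by (intro bounded_linear_sum)
qed

lemma outer_mv: "(outer p *v x) \<bullet> y = (p \<bullet> x) * (p \<bullet> y)"
  by (simp add: outer_def inner_vec_def matrix_vector_mult_def sum_distrib_left sum_distrib_right mult_ac)

lemma sq_int_le:
  assumes "prob_space F" "integrable F f"
  shows "ennreal ((integral\<^sup>L F f)\<^sup>2) \<le> (\<integral>\<^sup>+ x. ennreal ((f x)\<^sup>2) \<partial>F)"
proof (cases "integrable F (\<lambda>x. (f x)\<^sup>2)")
  case True
  have "(integral\<^sup>L F f)\<^sup>2 \<le> (LINT x|F. (f x)\<^sup>2)"
    using prob_space.variance_eq[OF assms True] prob_space.variance_positive[OF assms(1), of f]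
    by simp
  also have "ennreal \<dots> = (\<integral>\<^sup>+ x. ennreal ((f x)\<^sup>2) \<partial>F)"
    by (rule nn_integral_eq_integral[symmetric]) (use True in auto)
  finally show ?thesis by (simp add: ennreal_leI)
next
  case False
  have meas: "(\<lambda>x. (f x)\<^sup>2) \<in> borel_measurable F" using assms(2) by measurable
  have "\<not> (\<integral>\<^sup>+ x. ennreal (norm ((f x)\<^sup>2)) \<partial>F) < \<infinity>"
    using integrableI_bounded[OF meas] False by blast
  then have "(\<integral>\<^sup>+ x. ennreal ((f x)\<^sup>2) \<partial>F) = \<infinity>"
    by (simp add: less_top[symmetric])
  then show ?thesis by simp
qed

theorem lemma1:
  fixes N :: "'s measure" and K :: "'s \<Rightarrow> 's measure" and xi0 :: "'s measure"
    and \<psi> :: "'s \<Rightarrow> real^'d" and M :: "real^'d^'d" and t :: nat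
  defines "\<Sigma> \<equiv> (\<lambda>n. integral\<^sup>L (chain_dist xi0 K n) (\<lambda>s. outer (\<psi> s)))"
  assumes xi0_prob: "prob_space xi0" and xi0_sets: "sets xi0 = sets N"
    and K_meas: "K \<in> N \<rightarrow>\<^sub>M prob_algebra N"
    and psi_meas: "\<psi> \<in> borel_measurable N"
    and psi_int: "\<And>s. s \<in> space N \<Longrightarrow> integrable (K s) \<psi>"
    and M_prop: "\<And>s. s \<in> space N \<Longrightarrow> integral\<^sup>L (K s) \<psi> = \<psi> s v* M"
    and outer_int: "\<And>n. integrable (chain_dist xi0 K n) (\<lambda>s. outer (\<psi> s))"
    and pd: "pd_matrix (\<Sigma> (Suc t))"
  shows "spectral_norm (psd_sqrt (\<Sigma> t) ** M ** matrix_inv (psd_sqrt (\<Sigma> (Suc t)))) \<le> 1"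
proof -
  define mu where "mu n = chain_dist xi0 K n" for n
  have mu_ok: "prob_space (mu n) \<and> sets (mu n) = sets N" for n
  proof (induction n)
    case 0 then show ?case using xi0_prob xi0_sets by (simp add: mu_def)
  next
    case (Suc n)
    then have inA: "mu n \<in> space (prob_algebra N)" by (simp add: space_prob_algebra)
    have "mu (Suc n) = mu n \<bind> K" by (simp add: mu_def)
    then show ?case using prob_space_bind'[OF inA K_meas] sets_bind'[OF inA K_meas] by simp
  qed
  have Ks: "prob_space (K s) \<and> sets (K s) = sets N" if "s \<in> space N" for s
    using measurable_space[OF K_meas that] by (simp add: space_prob_algebra)
  have Sig_quad: "(\<Sigma> n *v x) \<bullet> y = (LINT s|mu n. (\<psi> s \<bullet> x) * (\<psi> s \<bullet> y))" for n x y
  proof -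
    have "(\<Sigma> n *v x) \<bullet> y = (LINT s|mu n. (outer (\<psi> s) *v x) \<bullet> y)"
      unfolding \<Sigma>_def mu_def
      by (rule integral_bounded_linear[OF bl_quad[of x y] outer_int[of n], symmetric])
    then show ?thesis by (simp add: outer_mv)
  qed
  have Sig_int: "integrable (mu n) (\<lambda>s. (\<psi> s \<bullet> x) * (\<psi> s \<bullet> y))" for n x y
    using integrable_bounded_linear[OF bl_quad[of x y] outer_int[of n]]
    unfolding mu_def by (simp add: outer_mv)
  have Sig_symm: "symm (\<Sigma> n)" for n
    unfolding symm_def
  proof (intro allI)
    fix x y
    have "x \<bullet> (\<Sigma> n *v y) = (\<Sigma> n *v y) \<bullet> x" by (rule inner_commute)
    then show "(\<Sigma> n *v x) \<bullet> y = x \<bullet> (\<Sigma> n *v y)" unfolding Sig_quad by (simp add: mult.commute)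
  qed
  have Sig_psd: "psd_matrix (\<Sigma> n)" for n
    unfolding psd_matrix_def
  proof
    show "transpose (\<Sigma> n) = \<Sigma> n" using Sig_symm by (simp add: symm_transpose)
    show "\<forall>x. 0 \<le> x \<bullet> (\<Sigma> n *v x)"
    proof
      fix x
      have "x \<bullet> (\<Sigma> n *v x) = (\<Sigma> n *v x) \<bullet> x" by (rule inner_commute)
      also have "\<dots> = (LINT s|mu n. (\<psi> s \<bullet> x) * (\<psi> s \<bullet> x))" by (rule Sig_quad)
      also have "\<dots> \<ge> 0" by (rule integral_nonneg_AE) simp
      finally show "0 \<le> x \<bullet> (\<Sigma> n *v x)" .
    qed
  qed
  have key: "(\<Sigma> t *v (M *v y)) \<bullet> (M *v y) \<le> (\<Sigma> (Suc t) *v y) \<bullet> y" for y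
  proof -
    define z where "z = M *v y"
    define g where "g s = (\<psi> s \<bullet> y)\<^sup>2" for s
    define h where "h s = (\<psi> s \<bullet> z)\<^sup>2" for s
    have L: "(\<Sigma> t *v z) \<bullet> z = integral\<^sup>L (mu t) h"
      unfolding Sig_quad h_def by (simp add: power2_eq_square)
    have R: "(\<Sigma> (Suc t) *v y) \<bullet> y = integral\<^sup>L (mu (Suc t)) g"
      unfolding Sig_quad g_def by (simp add: power2_eq_square)
    have hint: "integrable (mu t) h" using Sig_int[of t z z] unfolding h_def by (simp add: power2_eq_square)
    have gint: "integrable (mu (Suc t)) g" using Sig_int[of "Suc t" y y] unfolding g_def by (simp add: power2_eq_square)
    have gmeas: "g \<in> borel_measurable N" unfolding g_def using psi_meas by measurable
    have Kmu: "K \<in> mu t \<rightarrow>\<^sub>M subprob_algebra N"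
      using measurable_prob_algebraD[OF K_meas]
        measurable_cong_sets[OF conjunct2[OF mu_ok[of t]] refl, of "subprob_algebra N"] by simp
    have pw: "ennreal (h s) \<le> (\<integral>\<^sup>+ x. ennreal (g x) \<partial>K s)" if "s \<in> space (mu t)" for s
    proof -
      have "space (mu t) = space N" using mu_ok[of t] by (metis sets_eq_imp_space_eq)
      then have sN: "s \<in> space N" using that by simp
      have intf: "integrable (K s) (\<lambda>x. \<psi> x \<bullet> y)"
        using integrable_bounded_linear[OF bounded_linear_inner_left psi_int[OF sN]] .
      have "\<psi> s \<bullet> z = (\<psi> s v* M) \<bullet> y" unfolding z_def by (simp add: dot_lmul_matrix)
      also have "\<dots> = integral\<^sup>L (K s) \<psi> \<bullet> y" using M_prop[OF sN] by simp
      also have "\<dots> = (LINT x|K s. \<psi> x \<bullet> y)"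
        by (rule integral_bounded_linear[OF bounded_linear_inner_left psi_int[OF sN], symmetric])
      finally have "h s = (LINT x|K s. \<psi> x \<bullet> y)\<^sup>2" unfolding h_def by simp
      then show ?thesis using sq_int_le[OF conjunct1[OF Ks[OF sN]] intf] unfolding g_def by simp
    qed
    have "ennreal (integral\<^sup>L (mu t) h) = (\<integral>\<^sup>+ s. ennreal (h s) \<partial>mu t)"
      by (rule nn_integral_eq_integral[OF hint, symmetric]) (simp add: h_def)
    also have "\<dots> \<le> (\<integral>\<^sup>+ s. (\<integral>\<^sup>+ x. ennreal (g x) \<partial>K s) \<partial>mu t)"
      by (rule nn_integral_mono) (rule pw)
    also have "\<dots> = (\<integral>\<^sup>+ x. ennreal (g x) \<partial>(mu t \<bind> K))"
      by (rule nn_integral_bind[symmetric]) (use gmeas Kmu in auto)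
    also have "mu t \<bind> K = mu (Suc t)" by (simp add: mu_def)
    also have "(\<integral>\<^sup>+ x. ennreal (g x) \<partial>mu (Suc t)) = ennreal (integral\<^sup>L (mu (Suc t)) g)"
      by (rule nn_integral_eq_integral[OF gint]) (simp add: g_def)
    finally have le: "ennreal (integral\<^sup>L (mu t) h) \<le> ennreal (integral\<^sup>L (mu (Suc t)) g)" .
    have g0: "0 \<le> integral\<^sup>L (mu (Suc t)) g" by (rule integral_nonneg_AE) (simp add: g_def)
    have "integral\<^sup>L (mu t) h \<le> integral\<^sup>L (mu (Suc t)) g"
      using le ennreal_le_iff[OF g0] by blast
    then show ?thesis using L R unfolding z_def by simp
  qed
  define S where "S = psd_sqrt (\<Sigma> t)"
  define T where "T = psd_sqrt (\<Sigma> (Suc t))"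
  have Sok: "psd_matrix S \<and> S ** S = \<Sigma> t" unfolding S_def by (rule psd_sqrt_ok[OF Sig_psd])
  have Tok: "psd_matrix T \<and> T ** T = \<Sigma> (Suc t)" unfolding T_def by (rule psd_sqrt_ok[OF Sig_psd])
  have symS: "symm S" using Sok psd_symm by blast
  have symT: "symm T" using Tok psd_symm by blast
  have SS: "S *v (S *v x) = \<Sigma> t *v x" for x using Sok by (metis matrix_vector_mul_assoc)
  have TT: "T *v (T *v x) = \<Sigma> (Suc t) *v x" for x using Tok by (metis matrix_vector_mul_assoc)
  have injT: "inj ((*v) T)"
  proof (rule injI)
    fix x y assume "T *v x = T *v y"
    then have "T *v (x - y) = 0" by (simp add: matrix_vector_mult_diff_distrib)
    then have "\<Sigma> (Suc t) *v (x - y) = 0" using TT[of "x - y"] by simp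
    then have "(x - y) \<bullet> (\<Sigma> (Suc t) *v (x - y)) = 0" by simp
    moreover have "x - y \<noteq> 0 \<longrightarrow> 0 < (x - y) \<bullet> (\<Sigma> (Suc t) *v (x - y))"
      using pd unfolding pd_matrix_def by blast
    ultimately show "x = y" by auto
  qed
  have "surj ((*v) T)" by (rule linear_inj_imp_surj[OF matrix_vector_mul_linear injT])
  then have "invertible T" using injT by (simp add: invertible_eq_bij bij_def)
  then have TTi: "T ** matrix_inv T = mat 1"
    unfolding invertible_def matrix_inv_def by (rule someI_ex[THEN conjunct1])
  show ?thesis unfolding spectral_norm_def S_def[symmetric] T_def[symmetric]
  proof (rule onorm_le)
    fix x
    define y where "y = matrix_inv T *v x"
    have Ty: "T *v y = x" unfolding y_def using TTi by (simp add: matrix_vector_mul_assoc)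
    have eq: "(S ** M ** matrix_inv T) *v x = S *v (M *v y)"
      unfolding y_def by (simp add: matrix_vector_mul_assoc matrix_mul_assoc)
    have "(norm (S *v (M *v y)))\<^sup>2 = (S *v (M *v y)) \<bullet> (S *v (M *v y))"
      by (simp add: power2_norm_eq_inner)
    also have "\<dots> = (S *v (S *v (M *v y))) \<bullet> (M *v y)"
      using symS unfolding symm_def by metis
    also have "\<dots> = (\<Sigma> t *v (M *v y)) \<bullet> (M *v y)" by (simp add: SS)
    also have "\<dots> \<le> (\<Sigma> (Suc t) *v y) \<bullet> y" by (rule key)
    also have "\<dots> = (T *v (T *v y)) \<bullet> y" by (simp add: TT)
    also have "\<dots> = (T *v y) \<bullet> (T *v y)" using symT unfolding symm_def by metis
    also have "\<dots> = (norm x)\<^sup>2" using Ty by (simp add: power2_norm_eq_inner)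
    finally have "(norm (S *v (M *v y)))\<^sup>2 \<le> (norm x)\<^sup>2" .
    then have "norm (S *v (M *v y)) \<le> norm x" by (rule power2_le_imp_le) simp
    then show "norm ((S ** M ** matrix_inv T) *v x) \<le> 1 * norm x" using eq by simp
  qed
qed

end
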